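(* Let $I,I'\subset\mathbb{K}[x_1,\dots,x_n]$ be monomial ideals and define $m_I(\alpha)=\#E_\alpha(I)$ for $\alpha\in\mathbb{Z}^n$, and similarly $m_{I'}$. Suppose that $m_I(\alpha)=m_{I'}(\alpha)$ for all $\alpha\in\mathbb{Z}^n_{\ge0}$, and also for all $\alpha\in\mathbb{Z}^n\setminus\mathbb{Z}^n_{\ge0}$ such that there exists $1\le k\le n$ with $\alpha+e_k\in\mathbb{Z}^n_{\ge0}$ and $m_I(\alpha+e_k)=0$. Then $I=I'$.
   Context: $e_1,\dots,e_n$ is the standard basis of $\mathbb{Z}^n$. For a monomial ideal $I$, $\operatorname{supp}(I)=\{m\in\mathbb{Z}^n_{\ge0}\mid\mathbf{x}^m\in I\}$, $\operatorname{supp}^c(I)=\mathbb{Z}^n_{\ge0}\setminus\operatorname{supp}(I)$, and $E_\alpha(I)=\{e_i\mid\alpha+e_i\in\operatorname{supp}^c(I)\}$ for $\alpha\in\mathbb{Z}^n$. *)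

theory Defs
  imports "HOL-Library.Poly_Mapping" "HOL-Library.Function_Algebras"
begin

text \<open>Polynomial ring K[x_i | i in 'n] over a field K, with a finite type 'n of
  variables (so n = CARD('n)).\<close>

type_synonym ('n, 'k) mpoly = "('n \<Rightarrow>\<^sub>0 nat) \<Rightarrow>\<^sub>0 'k"

definition xmon :: "('n \<Rightarrow>\<^sub>0 nat) \<Rightarrow> ('n, 'k::field) mpoly" where
  "xmon m = Poly_Mapping.single m 1"

definition is_ideal :: "('n, 'k::field) mpoly set \<Rightarrow> bool" where
  "is_ideal I \<longleftrightarrow> 0 \<in> I \<and> (\<forall>p\<in>I. \<forall>q\<in>I. p + q \<in> I) \<and> (\<forall>p\<in>I. \<forall>r. r * p \<in> I)"

definition ideal_gen :: "('n, 'k::field) mpoly set \<Rightarrow> ('n, 'k) mpoly set" where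
  "ideal_gen S = \<Inter>{J. is_ideal J \<and> S \<subseteq> J}"

definition monomial_ideal :: "('n, 'k::field) mpoly set \<Rightarrow> bool" where
  "monomial_ideal I \<longleftrightarrow> (\<exists>M. I = ideal_gen (xmon ` M))"

definition nonneg :: "('n \<Rightarrow> int) \<Rightarrow> bool" where
  "nonneg \<alpha> \<longleftrightarrow> (\<forall>i. 0 \<le> \<alpha> i)"

definition to_mon :: "('n::finite \<Rightarrow> int) \<Rightarrow> ('n \<Rightarrow>\<^sub>0 nat)" where
  "to_mon \<alpha> = Abs_poly_mapping (\<lambda>i. nat (\<alpha> i))"

definition supp_mi :: "('n::finite, 'k::field) mpoly set \<Rightarrow> ('n \<Rightarrow> int) set" where
  "supp_mi I = {\<alpha>. nonneg \<alpha> \<and> xmon (to_mon \<alpha>) \<in> I}"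

definition suppc_mi :: "('n::finite, 'k::field) mpoly set \<Rightarrow> ('n \<Rightarrow> int) set" where
  "suppc_mi I = {\<alpha>. nonneg \<alpha>} - supp_mi I"

definition unitvec :: "'n \<Rightarrow> ('n \<Rightarrow> int)" where
  "unitvec i = (\<lambda>j. if j = i then 1 else 0)"

definition E_set :: "('n::finite, 'k::field) mpoly set \<Rightarrow> ('n \<Rightarrow> int) \<Rightarrow> ('n \<Rightarrow> int) set" where
  "E_set I \<alpha> = {unitvec i | i. \<alpha> + unitvec i \<in> suppc_mi I}"

definition m_fun :: "('n::finite, 'k::field) mpoly set \<Rightarrow> ('n \<Rightarrow> int) \<Rightarrow> nat" where
  "m_fun I \<alpha> = card (E_set I \<alpha>)"

end

theory Submission
  imports Defs
begin

lemma ideal_gen_ideal: "is_ideal (ideal_gen S)"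
  unfolding ideal_gen_def is_ideal_def by auto

lemma ideal_gen_sub: "S \<subseteq> ideal_gen S"
  unfolding ideal_gen_def by auto

lemma ideal_gen_least: "is_ideal J \<Longrightarrow> S \<subseteq> J \<Longrightarrow> ideal_gen S \<subseteq> J"
  unfolding ideal_gen_def by auto

lemma ideal_sum: assumes "is_ideal J" "finite A" "\<forall>a\<in>A. f a \<in> J" shows "sum f A \<in> J"
  using assms(2,3) proof (induction A rule: finite_induct)
qed (use assms(1) in \<open>auto simp: is_ideal_def\<close>)

lemma xmon_add: "xmon (a + b) = (xmon a * xmon b :: ('n, 'k::field) mpoly)"
  unfolding xmon_def by (simp add: mult_single)

lemma poly_decomp: "(p :: ('n, 'k::field) mpoly) = (\<Sum>m\<in>Poly_Mapping.keys p. Poly_Mapping.single 0 (Poly_Mapping.lookup p m) * xmon m)"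
proof (rule poly_mapping_eqI)
  fix k
  have "Poly_Mapping.lookup (\<Sum>m\<in>Poly_Mapping.keys p. Poly_Mapping.single 0 (Poly_Mapping.lookup p m) * xmon m) k
      = (\<Sum>m\<in>Poly_Mapping.keys p. Poly_Mapping.lookup (Poly_Mapping.single m (Poly_Mapping.lookup p m)) k)"
    by (simp add: lookup_sum xmon_def mult_single)
  also have "\<dots> = Poly_Mapping.lookup p k"
    by (simp add: lookup_single when_def in_keys_iff sum.delta)
  finally show "Poly_Mapping.lookup p k = Poly_Mapping.lookup (\<Sum>m\<in>Poly_Mapping.keys p. Poly_Mapping.single 0 (Poly_Mapping.lookup p m) * xmon m) k" by simp
qed

lemma monomial_char:
  fixes I :: "('n, 'k::field) mpoly set"
  assumes "monomial_ideal I"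
  shows "I = {p :: ('n, 'k) mpoly. \<forall>m\<in>Poly_Mapping.keys p. xmon m \<in> I}"
proof -
  obtain M where M: "I = ideal_gen (xmon ` M)" using assms monomial_ideal_def by blast
  have id: "is_ideal I" using M ideal_gen_ideal by simp
  let ?J = "{p :: ('n, 'k) mpoly. \<forall>m\<in>Poly_Mapping.keys p. xmon m \<in> I}"
  have "is_ideal ?J"
    unfolding is_ideal_def
  proof (intro conjI ballI allI)
    show "0 \<in> ?J" by simp
  next
    fix p q assume "p \<in> ?J" "q \<in> ?J"
    then show "p + q \<in> ?J" using keys_add[of p q] by auto
  next
    fix p r assume p: "p \<in> ?J"
    show "r * p \<in> ?J"
    proof (simp, intro ballI)
      fix m assume "m \<in> Poly_Mapping.keys (r * p)"
      then obtain a b where "m = a + b" "b \<in> Poly_Mapping.keys p" using keys_mult[of r p] by blast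
      then show "xmon m \<in> I" using p id unfolding is_ideal_def by (simp add: xmon_add)
    qed
  qed
  moreover have "xmon ` M \<subseteq> ?J"
  proof
    fix x :: "('n, 'k) mpoly" assume "x \<in> xmon ` M"
    then obtain g where g: "g \<in> M" "x = xmon g" by blast
    have "Poly_Mapping.keys (xmon g :: ('n, 'k) mpoly) = {g}" by (simp add: xmon_def)
    moreover have "xmon g \<in> I" unfolding M using g(1) ideal_gen_sub[of "xmon ` M"] by blast
    ultimately show "x \<in> ?J" using g by auto
  qed
  ultimately have "I \<subseteq> ?J" unfolding M by (rule ideal_gen_least)
  moreover have "?J \<subseteq> I"
  proof
    fix p assume p: "p \<in> ?J"
    have "(\<Sum>m\<in>Poly_Mapping.keys p. Poly_Mapping.single 0 (Poly_Mapping.lookup p m) * xmon m) \<in> I"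
      using p id by (intro ideal_sum) (auto simp: is_ideal_def)
    then show "p \<in> I" using poly_decomp[of p] by argo
  qed
  ultimately show ?thesis by blast
qed


lemma lookup_to_mon: "Poly_Mapping.lookup (to_mon (\<alpha> :: 'n::finite \<Rightarrow> int)) = (\<lambda>i. nat (\<alpha> i))"
  unfolding to_mon_def by (simp add: lookup_Abs_poly_mapping)

lemma to_mon_of: "to_mon (\<lambda>i. int (Poly_Mapping.lookup (m :: 'n::finite \<Rightarrow>\<^sub>0 nat) i)) = m"
  by (rule poly_mapping_eqI) (simp add: lookup_to_mon)

lemma unitvec_inj: "inj unitvec"
  unfolding inj_on_def unitvec_def by (metis zero_neq_one)

lemma m_fun_eq: "m_fun I \<alpha> = card {i. \<alpha> + unitvec i \<in> suppc_mi I}"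
proof -
  have "E_set I \<alpha> = unitvec ` {i. \<alpha> + unitvec i \<in> suppc_mi I}"
    unfolding E_set_def by auto
  then show ?thesis unfolding m_fun_def
    using card_image[OF inj_on_subset[OF unitvec_inj]] by simp
qed

lemma suppc_iff: "\<beta> \<in> suppc_mi I \<longleftrightarrow> nonneg \<beta> \<and> xmon (to_mon \<beta>) \<notin> I"
  unfolding suppc_mi_def supp_mi_def by auto

lemma to_mon_add_unit:
  assumes "nonneg (\<beta> :: 'n::finite \<Rightarrow> int)"
  shows "to_mon (\<beta> + unitvec i) = Poly_Mapping.single i 1 + to_mon \<beta>"
proof (rule poly_mapping_eqI)
  fix k
  show "Poly_Mapping.lookup (to_mon (\<beta> + unitvec i)) k = Poly_Mapping.lookup (Poly_Mapping.single i 1 + to_mon \<beta>) k"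
    using assms unfolding nonneg_def
    by (simp add: lookup_to_mon lookup_add lookup_single when_def unitvec_def nat_add_distrib)
qed

lemma upward:
  fixes I :: "('n::finite, 'k::field) mpoly set"
  assumes "monomial_ideal I" "nonneg \<beta>" "xmon (to_mon \<beta>) \<in> I"
  shows "xmon (to_mon (\<beta> + unitvec i)) \<in> I"
proof -
  obtain M where M: "I = ideal_gen (xmon ` M)" using assms monomial_ideal_def by blast
  have id: "is_ideal I" using M ideal_gen_ideal by simp
  show ?thesis using assms(2,3) id unfolding is_ideal_def
    by (simp add: to_mon_add_unit xmon_add)
qed

lemma nonneg_add_unit: "nonneg \<beta> \<Longrightarrow> nonneg (\<beta> + unitvec i)"
  unfolding nonneg_def unitvec_def by auto

theorem corollary3p3:
  fixes I I' :: "('n::finite, 'k::field) mpoly set"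
  assumes "monomial_ideal I" and "monomial_ideal I'"
    and "\<forall>\<alpha>. nonneg \<alpha> \<longrightarrow> m_fun I \<alpha> = m_fun I' \<alpha>"
    and "\<forall>\<alpha>. (\<not> nonneg \<alpha> \<and> (\<exists>k. nonneg (\<alpha> + unitvec k) \<and> m_fun I (\<alpha> + unitvec k) = 0))
              \<longrightarrow> m_fun I \<alpha> = m_fun I' \<alpha>"
  shows "I = I'"
proof -
  have main: "\<forall>(\<beta> :: 'n \<Rightarrow> int) k. nonneg \<beta> \<and> \<beta> k = int c \<longrightarrow> (xmon (to_mon \<beta>) \<in> I \<longleftrightarrow> xmon (to_mon \<beta>) \<in> I')" for c
  proof (induction c)
    case 0
    show ?case
    proof (intro allI impI)
      fix \<beta> :: "'n \<Rightarrow> int" and k :: 'n assume h: "nonneg \<beta> \<and> \<beta> k = int 0"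
      define \<alpha> where "\<alpha> = \<beta> - unitvec k"
      have ab: "\<alpha> + unitvec k = \<beta>" unfolding \<alpha>_def by simp
      have nn: "\<not> nonneg \<alpha>" using h unfolding \<alpha>_def nonneg_def unitvec_def by (auto intro!: exI[of _ k])
      have sets: "{i. \<alpha> + unitvec i \<in> suppc_mi J} = (if xmon (to_mon \<beta>) \<in> J then {} else {k})" for J :: "('n, 'k) mpoly set"
      proof -
        have "i \<noteq> k \<Longrightarrow> \<not> nonneg (\<alpha> + unitvec i)" for i
          using h unfolding \<alpha>_def nonneg_def unitvec_def by (auto intro!: exI[of _ k])
        then show ?thesis using ab h by (auto simp: suppc_iff; metis)
      qed
      show "xmon (to_mon \<beta>) \<in> I \<longleftrightarrow> xmon (to_mon \<beta>) \<in> I'"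
      proof (cases "m_fun I \<beta> = 0")
        case True
        then have "m_fun I \<alpha> = m_fun I' \<alpha>" using assms(4) nn ab h by metis
        then show ?thesis unfolding m_fun_eq sets by (auto split: if_splits)
      next
        case False
        have "m_fun I' \<beta> \<noteq> 0" using False assms(3) h by metis
        have z: "xmon (to_mon \<beta>) \<in> J \<Longrightarrow> monomial_ideal J \<Longrightarrow> m_fun J \<beta> = 0" for J :: "('n, 'k) mpoly set"
          unfolding m_fun_eq using upward[of J \<beta>] h by (auto simp: suppc_iff)
        show ?thesis using z[of I] z[of I'] False \<open>m_fun I' \<beta> \<noteq> 0\<close> assms(1,2) by blast
      qed
    qed
  next
    case (Suc c)
    show ?case
    proof (intro allI impI)
      fix \<beta> :: "'n \<Rightarrow> int" and k :: 'n assume h: "nonneg \<beta> \<and> \<beta> k = int (Suc c)"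
      define \<gamma> where "\<gamma> = \<beta> - unitvec k"
      have gb: "\<gamma> + unitvec k = \<beta>" unfolding \<gamma>_def by simp
      have gn: "nonneg \<gamma>" using h unfolding \<gamma>_def nonneg_def unitvec_def by auto
      have gk: "(\<gamma> + unitvec i) k = int c" if "i \<noteq> k" for i
        using h that unfolding \<gamma>_def unitvec_def by auto
      define A where "A = {i. \<gamma> + unitvec i \<in> suppc_mi I}"
      define B where "B = {i. \<gamma> + unitvec i \<in> suppc_mi I'}"
      have agree: "xmon (to_mon (\<gamma> + unitvec i)) \<in> I \<longleftrightarrow> xmon (to_mon (\<gamma> + unitvec i)) \<in> I'" if "i \<noteq> k" for i
        using Suc.IH gk[OF that] nonneg_add_unit[OF gn, of i] by blast
      have AB: "A - {k} = B - {k}"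
        unfolding A_def B_def using agree by (auto simp: suppc_iff)
      have cAB: "card A = card B" using assms(3) gn unfolding A_def B_def m_fun_eq by simp
      have "k \<in> A \<longleftrightarrow> k \<in> B"
      proof (rule ccontr)
        assume "\<not> (k \<in> A \<longleftrightarrow> k \<in> B)"
        then consider "k \<in> A" "k \<notin> B" | "k \<notin> A" "k \<in> B" by blast
        then show False
        proof cases
          case 1
          then have "A = insert k (B - {k})" "B = B - {k}" using AB by auto
          then have "card A = card B + 1" by (metis card_insert_disjoint finite Diff_iff insertI1 Suc_eq_plus1)
          then show False using cAB by simp
        next
          case 2
          then have "B = insert k (A - {k})" "A = A - {k}" using AB by auto
          then have "card B = card A + 1" by (metis card_insert_disjoint finite Diff_iff insertI1 Suc_eq_plus1)
          then show False using cAB by simp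
        qed
      qed
      then show "xmon (to_mon \<beta>) \<in> I \<longleftrightarrow> xmon (to_mon \<beta>) \<in> I'"
        unfolding A_def B_def using gb h by (auto simp: suppc_iff)
    qed
  qed
  have mon: "xmon m \<in> I \<longleftrightarrow> xmon m \<in> I'" for m
  proof -
    obtain k :: 'n where True by simp
    let ?\<beta> = "\<lambda>i. int (Poly_Mapping.lookup m i)"
    have "nonneg ?\<beta>" unfolding nonneg_def by simp
    then show ?thesis using main[of "Poly_Mapping.lookup m k"] to_mon_of[of m] by metis
  qed
  show ?thesis
    using monomial_char[OF assms(1)] monomial_char[OF assms(2)] mon by blast
qed

end
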